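(* The probability of miss-detection $p_{miss}=F(\gamma|2N_RL,2N_RL(N_s-1),L\eta)$ satisfies \[ \lim_{L\uparrow \infty} -\frac{1}{L}\log p_{miss} = \begin{cases} I^*(\eta,\gamma), & \gamma<\frac{2N_R+\eta}{2N_R(N_s-1)} \\ 0, & \text{otherwise} \end{cases} \] where $I^*(\eta,\gamma)$ is the rate function given by \[ I^*(\eta,\gamma) = \frac{\eta}{2} \left(1-\frac{\gamma v^*}{N_R + \sqrt{N_R^2+\gamma \eta v^*}}\right) + N_R(N_s-1)\log \frac{2N_R(N_s-1)}{v^*} - N_R\log \frac{\gamma v^*}{N_R + \sqrt{N_R^2+\gamma \eta v^*}}. \] Here $v^*= \frac{x^{*2}-N_R^2}{\eta\gamma}$ and $x^*>0$ is a solution to the equation \[ \frac{\gamma+1}{\eta\gamma}(x^2-N_R^2) - x - N_R -2N_R(N_s-1) = 0. \] Moreover, when $\gamma<\frac{2N_R+\eta}{2N_R(N_s-1)}$, $I^*(\eta,\gamma)$ is monotonically increasing in $\eta$.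
   Context: A UE with $N_R$ receive antennas detects a base-station reference signal (RS) of $N_s$ samples over $L$ slots using a GLRT statistic $L_G(\tau)$, compared to a threshold $\gamma>0$. Under the signal-present hypothesis, $(N_s-1)L_G(\tau)$ follows a non-central F-distribution with degrees of freedom $2N_RL$ and $2N_RL(N_s-1)$ and non-centrality parameter $\lambda = L\eta$, where $\eta=\lambda/L>0$ is the normalised non-centrality parameter (proportional to the average effective channel/beamforming gain, $\eta = \frac{2P_T N_s}{\sigma^2}\cdot\frac{1}{L}\sum_{l=1}^L\|\mathbf{h}_l\|_2^2$, with $P_T$ the average transmit power, $\sigma^2$ the noise variance and $\mathbf{h}_l$ the effective channel in slot $l$), held fixed as $L$ grows. $F(x|n_1,n_2,\lambda)$ denotes the CDF of the non-central F-distribution with degrees of freedom $n_1,n_2$ and non-centrality parameter $\lambda$, and the miss-detection probability is $p_{miss}=F(\gamma|2N_RL,2N_RL(N_s-1),L\eta)$. *)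

theory Defs
  imports "HOL-Analysis.Analysis"
begin

definition chi2_density :: "real \<Rightarrow> real \<Rightarrow> real" where
  "chi2_density k x =
     (if x > 0 then x powr (k/2 - 1) * exp (- x/2) / (2 powr (k/2) * Gamma (k/2)) else 0)"

definition nc_chi2_density :: "real \<Rightarrow> real \<Rightarrow> real \<Rightarrow> real" where
  "nc_chi2_density k lam x =
     (\<Sum>j. exp (- lam/2) * (lam/2) ^ j / fact j * chi2_density (k + 2 * real j) x)"

text \<open>CDF F(x | n1, n2, lam) of the (standard) non-central F-distribution, i.e. of
  (X1/n1)/(X2/n2) with X1 ~ non-central chi-square(n1, lam), X2 ~ chi-square(n2) independent:
  P((X1/n1)/(X2/n2) \<le> x) = P(X1 \<le> x * n1/n2 * X2).\<close>
definition ncF_cdf :: "real \<Rightarrow> real \<Rightarrow> real \<Rightarrow> real \<Rightarrow> real" where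
  "ncF_cdf x n1 n2 lam =
     (\<integral>b. chi2_density n2 b *
            (\<integral>a. indicator {..x * n1 / n2 * b} a * nc_chi2_density n1 lam a \<partial>lborel) \<partial>lborel)"

text \<open>Miss-detection probability: P(L_G \<le> gamma) where (N_s-1) L_G is non-central F with
  dof 2 N_R L, 2 N_R L (N_s-1) and non-centrality L eta.\<close>
definition p_miss :: "nat \<Rightarrow> nat \<Rightarrow> nat \<Rightarrow> real \<Rightarrow> real \<Rightarrow> real" where
  "p_miss NR Ns L eta gamma =
     ncF_cdf ((real Ns - 1) * gamma) (2 * real NR * real L)
             (2 * real NR * real L * (real Ns - 1)) (real L * eta)"

definition xstar :: "nat \<Rightarrow> nat \<Rightarrow> real \<Rightarrow> real \<Rightarrow> real" where
  "xstar NR Ns eta gamma =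
     (THE x. x > 0 \<and> (gamma + 1) / (eta * gamma) * (x^2 - (real NR)^2) - x - real NR
                        - 2 * real NR * (real Ns - 1) = 0)"

definition vstar :: "nat \<Rightarrow> nat \<Rightarrow> real \<Rightarrow> real \<Rightarrow> real" where
  "vstar NR Ns eta gamma = ((xstar NR Ns eta gamma)^2 - (real NR)^2) / (eta * gamma)"

definition Istar :: "nat \<Rightarrow> nat \<Rightarrow> real \<Rightarrow> real \<Rightarrow> real" where
  "Istar NR Ns eta gamma =
     (let v = vstar NR Ns eta gamma;
          q = gamma * v / (real NR + sqrt ((real NR)^2 + gamma * eta * v))
      in eta / 2 * (1 - q)
         + real NR * (real Ns - 1) * ln (2 * real NR * (real Ns - 1) / v)
         - real NR * ln q)"

end

theory Submission
  imports Defs "HOL-Probability.Distributions" "HOL-Real_Asymp.Real_Asymp"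
begin


lemma fact_upper: "fact n \<le> (real n + 1) ^ (n+1) * exp (- real n)"
proof (induction n)
  case 0 then show ?case by simp
next
  case (Suc n)
  have key: "exp 1 * (real n + 1) ^ (n+2) \<le> (real n + 2) ^ (n+2)"
  proof -
    have "1 \<le> (real n + 2) * ln (1 + 1/(real n + 1))"
    proof -
      have "ln (1 + 1/(real n + 1)) \<ge> (1/(real n + 1)) / (1 + 1/(real n + 1))"
      proof -
        have "ln (1 + 1/(real n+1)) = - ln (1 - 1/(real n + 2))"
          by (simp add: field_simps ln_div[symmetric]) (simp add: ln_div)
        also have "\<dots> \<ge> 1/(real n + 2)"
          using ln_le_minus_one[of "1 - 1/(real n + 2)"] by (simp add: field_simps)
        finally show ?thesis by (simp add: field_simps)
      qed
      then show ?thesis by (simp add: field_simps)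
    qed
    hence "exp 1 \<le> exp ((real n + 2) * ln (1 + 1/(real n + 1)))" by simp
    also have "\<dots> = (1 + 1/(real n + 1)) ^ (n+2)"
    proof -
      have "(real n + 2) * ln (1 + 1/(real n + 1)) = ln ((1 + 1/(real n + 1)) ^ (n+2))"
        by (subst ln_realpow) (auto simp: add_pos_pos)
      then show ?thesis by (simp add: add_pos_pos)
    qed
    finally have "exp 1 \<le> ((real n + 2)/(real n + 1)) ^ (n+2)" by (simp add: field_simps)
    hence "exp 1 \<le> (real n + 2) ^ (n+2) / (real n + 1) ^ (n+2)" by (simp add: power_divide)
    then show ?thesis by (simp add: pos_le_divide_eq mult.commute)
  qed
  have "fact (Suc n) = (real n + 1) * fact n" by simp
  also have "\<dots> \<le> (real n + 1) * ((real n + 1) ^ (n+1) * exp (- real n))"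
    using Suc by (intro mult_left_mono) auto
  also have "\<dots> = exp (- real n - 1) * (exp 1 * (real n + 1) ^ (n+2))"
    by (simp add: exp_diff exp_minus field_simps)
  also have "\<dots> \<le> exp (- real n - 1) * (real n + 2) ^ (n+2)"
    using key by (intro mult_left_mono) auto
  finally have "fact (Suc n) \<le> exp (- real n - 1) * (real n + 2) ^ (n+2)" .
  moreover have "(real (Suc n) + 1) ^ (Suc n + 1) * exp (- real (Suc n)) = exp (- real n - 1) * (real n + 2) ^ (n+2)"
  proof -
    have "real (Suc n) + 1 = real n + 2" "Suc n + 1 = n + 2" "- real (Suc n) = - real n - 1" by auto
    then show ?thesis by (simp only: mult.commute)
  qed
  ultimately show ?case by simp
qed



definition Tf :: "real \<Rightarrow> nat \<Rightarrow> real" where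
  "Tf mu n = mu - real n * ln mu + (real n + 1) * ln (real n + 1) - real n"

lemma ln_pm_ge:
  assumes "mu > 0"
  shows "ln (mu ^ n * exp (- mu) / fact n) \<ge> - Tf mu n"
proof -
  have f: "ln (fact n) \<le> (real n + 1) * ln (real n + 1) - real n"
  proof -
    have "ln (fact n) \<le> ln ((real n + 1) ^ (n+1) * exp (- real n))"
      using fact_upper[of n] by (subst ln_le_cancel_iff) auto
    also have "\<dots> = (real n + 1) * ln (real n + 1) - real n"
    proof -
      have "ln ((real n + 1) ^ (n+1)) = real (n+1) * ln (real n + 1)"
        by (simp add: ln_realpow del: power_Suc)
      then show ?thesis by (simp add: ln_mult del: power_Suc)
    qed
    finally show ?thesis .
  qed
  have "ln (mu ^ n * exp (- mu) / fact n) = real n * ln mu - mu - ln (fact n)"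
    using assms by (simp add: ln_div ln_mult ln_realpow)
  then show ?thesis using f unfolding Tf_def by linarith
qed

lemma lnL_over_L: "(\<lambda>L::nat. ln (real L) / real L) \<longlonglongrightarrow> 0"
  by real_asymp

lemma T_asymp:
  fixes nn :: "nat \<Rightarrow> nat"
  assumes r: "(\<lambda>L. real (nn L) / real L) \<longlonglongrightarrow> kappa" and k: "kappa > 0" and a: "alpha > 0"
  shows "(\<lambda>L. Tf (alpha * real L) (nn L) / real L) \<longlonglongrightarrow> alpha - kappa + kappa * ln (kappa / alpha)"
proof -
  have inv: "(\<lambda>L::nat. 1 / real L) \<longlonglongrightarrow> 0" by real_asymp
  have r1: "(\<lambda>L. real (nn L) / real L + 1 / real L) \<longlonglongrightarrow> kappa"
    using tendsto_add[OF r inv] by simp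
  have l1: "(\<lambda>L. ln (real (nn L) / real L + 1 / real L)) \<longlonglongrightarrow> ln kappa"
    by (rule tendsto_ln[OF r1]) (use k in auto)
  have l2: "(\<lambda>L. ln (real (nn L) / real L + 1 / real L) * (1 / real L)) \<longlonglongrightarrow> 0"
    using tendsto_mult[OF l1 inv] by simp
  have lim: "(\<lambda>L. alpha - real (nn L) / real L + real (nn L) / real L * (ln (real (nn L) / real L + 1 / real L) - ln alpha)
        + ln (real (nn L) / real L + 1 / real L) * (1 / real L) + ln (real L) / real L)
      \<longlonglongrightarrow> alpha - kappa + kappa * (ln kappa - ln alpha) + 0 + 0"
    by (intro tendsto_intros r l1 l2 lnL_over_L)
  have ev: "\<forall>\<^sub>F L in sequentially. Tf (alpha * real L) (nn L) / real L =
      alpha - real (nn L) / real L + real (nn L) / real L * (ln (real (nn L) / real L + 1 / real L) - ln alpha)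
        + ln (real (nn L) / real L + 1 / real L) * (1 / real L) + ln (real L) / real L"
  proof (rule eventually_sequentiallyI[of 1])
    fix L :: nat assume "L \<ge> 1"
    hence Lp: "real L > 0" by auto
    have e1: "real (nn L) / real L + 1 / real L = (real (nn L) + 1) / real L" by (simp add: add_divide_distrib)
    have e2: "ln ((real (nn L) + 1) / real L) = ln (real (nn L) + 1) - ln (real L)"
      using Lp by (simp add: ln_div add_pos_nonneg)
    have e3: "ln (alpha * real L) = ln alpha + ln (real L)" using Lp a by (simp add: ln_mult)
    show "Tf (alpha * real L) (nn L) / real L =
      alpha - real (nn L) / real L + real (nn L) / real L * (ln (real (nn L) / real L + 1 / real L) - ln alpha)
        + ln (real (nn L) / real L + 1 / real L) * (1 / real L) + ln (real L) / real L"
      unfolding Tf_def e1 e2 e3 using Lp by (simp add: field_simps)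
  qed
  have "alpha - kappa + kappa * (ln kappa - ln alpha) + 0 + 0 = alpha - kappa + kappa * ln (kappa / alpha)"
    using a k by (simp add: ln_div)
  with Lim_transform_eventually[OF lim eventually_mono[OF ev]] show ?thesis
    by (metis (mono_tags, lifting) ev lim tendsto_cong)
qed



lemma xstar_facts:
  assumes NR: "NR \<ge> 1" and Ns: "Ns \<ge> 2" and e: "eta > 0" and g: "gamma > 0"
  shows "xstar NR Ns eta gamma > real NR"
    and "(gamma + 1) / (eta * gamma) * ((xstar NR Ns eta gamma)^2 - (real NR)^2) - xstar NR Ns eta gamma - real NR
                        - 2 * real NR * (real Ns - 1) = 0"
proof -
  define a where "a = (gamma + 1) / (eta * gamma)"
  define C where "C = a * (real NR)^2 + real NR + 2 * real NR * (real Ns - 1)"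
  have a: "a > 0" unfolding a_def using e g by auto
  have CP: "C > 0" unfolding C_def using a NR Ns by (auto intro!: add_nonneg_pos add_pos_nonneg)
  define P where "P = (\<lambda>x. x > 0 \<and> (gamma + 1) / (eta * gamma) * (x^2 - (real NR)^2) - x - real NR
                        - 2 * real NR * (real Ns - 1) = 0)"
  have Peq: "P x \<longleftrightarrow> x > 0 \<and> a * x^2 - x - C = 0" for x
    unfolding P_def a_def C_def by (auto simp: algebra_simps)
  define x0 where "x0 = (1 + sqrt (1 + 4 * a * C)) / (2 * a)"
  have "0 \<le> 1 + 4 * a * C" using a CP by (simp add: add_nonneg_nonneg)
  hence s: "sqrt (1 + 4 * a * C) ^ 2 = 1 + 4 * a * C" by simp
  have x0: "P x0"
  proof -
    have "x0 > 0" unfolding x0_def using a CP by (auto intro!: divide_pos_pos add_pos_nonneg)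
    moreover have "a * x0^2 - x0 - C = 0"
    proof -
      have "a * x0^2 - x0 - C = (sqrt (1 + 4 * a * C) ^ 2 - (1 + 4 * a * C)) / (4 * a)"
        unfolding x0_def using a by (simp add: field_simps power2_eq_square)
      then show ?thesis using s by simp
    qed
    ultimately show ?thesis using Peq by auto
  qed
  have uniq: "y = x0" if "P y" for y
  proof (rule ccontr)
    assume ne: "y \<noteq> x0"
    have y: "y > 0" "a * y^2 - y - C = 0" using that Peq by auto
    have x: "x0 > 0" "a * x0^2 - x0 - C = 0" using x0 Peq by auto
    have "(y - x0) * (a * (y + x0) - 1) = (a * y^2 - y - C) - (a * x0^2 - x0 - C)" by algebra
    hence "(y - x0) * (a * (y + x0) - 1) = 0" using x y by simp
    hence s1: "a * (y + x0) = 1" using ne by auto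
    have "a * y * (y - 1/a) = a * y^2 - y" using a by (simp add: right_diff_distrib power2_eq_square)
    hence "a * y * (y - 1/a) = C" using y by simp
    moreover have "y - 1/a = - x0" using s1 a by (simp add: field_simps)
    ultimately have "- (a * y * x0) = C" by simp
    moreover have "a * y * x0 > 0" using a x y by simp
    ultimately show False using CP by linarith
  qed
  have "xstar NR Ns eta gamma = (THE x. P x)" unfolding xstar_def P_def by simp
  also have "\<dots> = x0" by (rule the_equality[where P=P, OF x0 uniq])
  finally have "xstar NR Ns eta gamma = x0" .
  hence X: "P (xstar NR Ns eta gamma)" using x0 by simp
  then show "(gamma + 1) / (eta * gamma) * ((xstar NR Ns eta gamma)^2 - (real NR)^2) - xstar NR Ns eta gamma - real NR
                        - 2 * real NR * (real Ns - 1) = 0" unfolding P_def by auto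
  show "xstar NR Ns eta gamma > real NR"
  proof (rule ccontr)
    let ?x = "xstar NR Ns eta gamma"
    assume "\<not> ?x > real NR"
    hence "?x \<le> real NR" by simp
    moreover have "?x > 0" using X P_def by auto
    ultimately have "?x^2 \<le> (real NR)^2" by (intro power_mono) auto
    hence "a * (?x^2 - (real NR)^2) \<le> 0" using a by (simp add: mult_nonneg_nonpos)
    moreover have "a * (?x^2 - (real NR)^2) = ?x + real NR + 2 * real NR * (real Ns - 1)"
      using X unfolding P_def a_def by (simp add: algebra_simps)
    moreover have "?x + real NR + 2 * real NR * (real Ns - 1) > 0"
    proof -
      have "real Ns - 1 \<ge> 0" using Ns by simp
      hence "0 \<le> 2 * real NR * (real Ns - 1)" by simp
      then show ?thesis using \<open>?x > 0\<close> by linarith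
    qed
    ultimately show False by linarith
  qed
qed



definition phi :: "nat \<Rightarrow> nat \<Rightarrow> real \<Rightarrow> real \<Rightarrow> real \<Rightarrow> real" where
  "phi NR Ns eta gamma t = real NR * ln (1 + 2*t) + eta * t / (1 + 2*t)
      + real NR * (real Ns - 1) * ln (1 - 2*t*gamma)"

definition qstar :: "nat \<Rightarrow> nat \<Rightarrow> real \<Rightarrow> real \<Rightarrow> real" where
  "qstar NR Ns eta gamma = (xstar NR Ns eta gamma - real NR) / eta"

definition tstar :: "nat \<Rightarrow> nat \<Rightarrow> real \<Rightarrow> real \<Rightarrow> real" where
  "tstar NR Ns eta gamma = (1 / qstar NR Ns eta gamma - 1) / 2"

lemma q_facts:
  assumes NR: "NR \<ge> 1" and Ns: "Ns \<ge> 2" and e: "eta > 0" and g: "gamma > 0"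
  defines "q \<equiv> qstar NR Ns eta gamma" and "v \<equiv> vstar NR Ns eta gamma"
      and "n2 \<equiv> real NR * (real Ns - 1)"
  shows "q > 0" and "(2 * real NR + eta * q) * ((gamma + 1) * q - gamma) = 2 * gamma * n2"
    and "v = q * (2 * real NR + eta * q) / gamma" and "(gamma + 1) * q - gamma > 0"
    and "gamma < (2 * real NR + eta) / (2 * real NR * (real Ns - 1)) \<Longrightarrow> q < 1"
    and "Istar NR Ns eta gamma = eta / 2 * (1 - q) + n2 * ln (2 * n2 / v) - real NR * ln q"
    and "n2 > 0" and "v > 0"
proof -
  let ?x = "xstar NR Ns eta gamma"
  have xg: "?x > real NR" and Q: "(gamma + 1) / (eta * gamma) * (?x^2 - (real NR)^2) - ?x - real NR
                        - 2 * real NR * (real Ns - 1) = 0" using xstar_facts[OF assms(1-4)] by auto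
  have xq: "?x = real NR + eta * q" unfolding q_def qstar_def using e by simp
  show qp: "q > 0" unfolding q_def qstar_def using xg e by simp
  show n2p: "n2 > 0" unfolding n2_def using NR Ns by auto
  have sq: "?x^2 - (real NR)^2 = eta * q * (2 * real NR + eta * q)"
    unfolding xq by (simp add: power2_eq_square algebra_simps)
  have Q2: "(gamma + 1) * (?x^2 - (real NR)^2) = eta * gamma * (?x + real NR + 2 * n2)"
  proof -
    have "(gamma + 1) / (eta * gamma) * (?x^2 - (real NR)^2) = ?x + real NR + 2 * n2"
      using Q unfolding n2_def by (simp add: algebra_simps)
    then show ?thesis using e g by (simp add: field_simps)
  qed
  have Q3: "(gamma + 1) * (eta * q * (2 * real NR + eta * q)) = eta * gamma * (real NR + eta * q + real NR + 2 * n2)"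
    using Q2[unfolded sq, unfolded xq] by simp
  have "eta * ((gamma + 1) * q * (2 * real NR + eta * q)) = eta * (gamma * (2 * real NR + eta * q + 2 * n2))"
    using Q3 by (simp add: algebra_simps)
  hence K: "(gamma + 1) * q * (2 * real NR + eta * q) = gamma * (2 * real NR + eta * q + 2 * n2)"
    using e by simp
  show key: "(2 * real NR + eta * q) * ((gamma + 1) * q - gamma) = 2 * gamma * n2"
    using K by (simp add: algebra_simps)
  show vq: "v = q * (2 * real NR + eta * q) / gamma"
    unfolding v_def vstar_def sq using e g by (simp add: field_simps)
  have pos1: "2 * real NR + eta * q > 0" using qp e by (simp add: add_nonneg_pos)
  show d: "(gamma + 1) * q - gamma > 0"
  proof -
    have "2 * gamma * n2 > 0" using g n2p by simp
    hence "(2 * real NR + eta * q) * ((gamma + 1) * q - gamma) > 0" using key by simp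
    then show ?thesis using pos1 by (simp add: zero_less_mult_iff)
  qed
  show "q < 1" if gl: "gamma < (2 * real NR + eta) / (2 * real NR * (real Ns - 1))"
  proof (rule ccontr)
    assume "\<not> q < 1" hence q1: "q \<ge> 1" by simp
    have "2 * real NR + eta \<le> 2 * real NR + eta * q" using q1 e by simp
    moreover have "1 \<le> (gamma + 1) * q - gamma"
    proof -
      have "(gamma+1)*(q-1) \<ge> 0" using q1 g by simp
      moreover have "(gamma + 1) * q - gamma = 1 + (gamma+1)*(q-1)" by (simp add: algebra_simps)
      ultimately show ?thesis by linarith
    qed
    ultimately have "(2 * real NR + eta) * 1 \<le> (2 * real NR + eta * q) * ((gamma + 1) * q - gamma)"
      using e by (intro mult_mono) auto
    hence "2 * real NR + eta \<le> 2 * gamma * n2" using key by simp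
    moreover have "gamma * (2 * n2) < 2 * real NR + eta"
      using gl n2p unfolding n2_def by (simp add: pos_less_divide_eq mult.assoc)
    ultimately show False by simp
  qed
  show vp: "v > 0" unfolding vq using qp pos1 g by simp
  show "Istar NR Ns eta gamma = eta / 2 * (1 - q) + n2 * ln (2 * n2 / v) - real NR * ln q"
  proof -
    have gev: "gamma * eta * v = ?x^2 - (real NR)^2"
      unfolding v_def vstar_def using e g by (simp add: field_simps)
    have "sqrt ((real NR)^2 + gamma * eta * v) = ?x" unfolding gev using xg by simp
    moreover have "gamma * v = q * (2 * real NR + eta * q)" unfolding vq using g by simp
    moreover have "real NR + ?x = 2 * real NR + eta * q" using xq by simp
    ultimately have "gamma * v / (real NR + sqrt ((real NR)^2 + gamma * eta * v)) = q"
      using pos1 by simp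
    then show ?thesis unfolding Istar_def Let_def v_def[symmetric] n2_def by (simp add: mult.assoc)
  qed
qed

definition Rf :: "nat \<Rightarrow> nat \<Rightarrow> real \<Rightarrow> real \<Rightarrow> real \<Rightarrow> real \<Rightarrow> real" where
  "Rf NR Ns eta a b c =
     (eta/2 - c + c * ln (c / (eta/2)))
   + (a/2 - (real NR + c) + (real NR + c) * ln ((real NR + c) / (a/2)))
   + (b/2 - real NR * (real Ns - 1) + real NR * (real Ns - 1) * ln (real NR * (real Ns - 1) / (b/2)))"

lemma t_facts:
  assumes NR: "NR \<ge> 1" and Ns: "Ns \<ge> 2" and e: "eta > 0" and g: "gamma > 0"
  defines "q \<equiv> qstar NR Ns eta gamma" and "v \<equiv> vstar NR Ns eta gamma"
      and "n2 \<equiv> real NR * (real Ns - 1)" and "t \<equiv> tstar NR Ns eta gamma"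
  shows "1 + 2 * t > 0" and "1 - 2 * t * gamma > 0"
    and "Istar NR Ns eta gamma = phi NR Ns eta gamma t"
    and "Istar NR Ns eta gamma = Rf NR Ns eta (gamma * v) v (eta * q / 2)"
    and "gamma < (2 * real NR + eta) / (2 * real NR * (real Ns - 1)) \<Longrightarrow> t > 0"
    and "\<And>s. 1 + 2 * s > 0 \<Longrightarrow> 1 - 2 * s * gamma > 0 \<Longrightarrow> phi NR Ns eta gamma s \<le> phi NR Ns eta gamma t"
proof -
  note F = q_facts[OF assms(1-4), folded q_def v_def n2_def]
  have qp: "q > 0" and key: "(2 * real NR + eta * q) * ((gamma + 1) * q - gamma) = 2 * gamma * n2"
    and vq: "v = q * (2 * real NR + eta * q) / gamma" and d: "(gamma + 1) * q - gamma > 0"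
    and I: "Istar NR Ns eta gamma = eta / 2 * (1 - q) + n2 * ln (2 * n2 / v) - real NR * ln q"
    and n2p: "n2 > 0" and vp: "v > 0" using F by auto
  have pos1: "2 * real NR + eta * q > 0" using qp e by (simp add: add_nonneg_pos)
  have y: "1 + 2 * t = 1 / q" unfolding t_def tstar_def q_def by (simp add: diff_divide_distrib)
  show yp: "1 + 2 * t > 0" using y qp by simp
  have A: "gamma * v = q * (2 * real NR + eta * q)" unfolding vq using g by simp
  have z: "1 - 2 * t * gamma = 2 * n2 / v"
  proof -
    have "1 - 2 * t * gamma = ((gamma + 1) * q - gamma) / q"
      unfolding t_def tstar_def q_def[symmetric] using qp by (simp add: field_simps)
    also have "\<dots> = ((gamma + 1) * q - gamma) * (2 * real NR + eta * q) / (q * (2 * real NR + eta * q))"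
      using pos1 by simp
    also have "\<dots> = 2 * gamma * n2 / (gamma * v)" unfolding A using key by (simp add: mult.commute)
    also have "\<dots> = 2 * n2 / v" using g by simp
    finally show ?thesis .
  qed
  show zp: "1 - 2 * t * gamma > 0" unfolding z using n2p vp by simp
  show I1: "Istar NR Ns eta gamma = phi NR Ns eta gamma t"
  proof -
    have "eta * t / (1 + 2 * t) = eta / 2 * (1 - q)"
      unfolding y unfolding t_def tstar_def q_def[symmetric] using qp by (simp add: field_simps)
    moreover have "ln (1 + 2 * t) = - ln q" unfolding y using qp by (simp add: ln_div)
    ultimately show ?thesis unfolding I phi_def z n2_def[symmetric] by simp
  qed
  show "Istar NR Ns eta gamma = Rf NR Ns eta (gamma * v) v (eta * q / 2)"
  proof -
    have B: "(gamma + 1) * v = 2 * real NR + eta * q + 2 * n2"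
    proof -
      have K': "(gamma+1)*(q*(2 * real NR + eta * q)) = gamma*(2 * real NR + eta * q + 2 * n2)"
        using key by (simp add: algebra_simps)
      have "(gamma + 1) * v = (gamma+1)*(q*(2 * real NR + eta * q)) / gamma" unfolding vq by simp
      also have "\<dots> = gamma*(2 * real NR + eta * q + 2 * n2) / gamma" using K' by simp
      also have "\<dots> = 2 * real NR + eta * q + 2 * n2" using g by simp
      finally show ?thesis .
    qed
    have l1: "ln ((eta * q / 2) / (eta / 2)) = ln q" using e by simp
    have l2: "ln ((real NR + eta * q / 2) / (gamma * v / 2)) = - ln q"
    proof -
      have gen: "(PP/2)/((qq*PP)/2) = 1/qq" if "PP > 0" "qq > 0" for PP qq :: real
        using that by simp
      have eq1: "real NR + eta * q / 2 = (2 * real NR + eta * q) / 2" by simp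
      have "(real NR + eta * q / 2) / (gamma * v / 2) = ((2 * real NR + eta * q)/2)/((q*(2 * real NR + eta * q))/2)"
        by (simp only: A eq1)
      also have "\<dots> = 1/q" by (rule gen[OF pos1 qp])
      finally have "(real NR + eta * q / 2) / (gamma * v / 2) = 1 / q" .
      then show ?thesis using qp by (simp add: ln_div)
    qed
    have l3: "ln (n2 / (v / 2)) = ln (2 * n2 / v)" by (simp add: field_simps)
    have br: "gamma * v / 2 + v / 2 - eta * q / 2 - real NR - n2 = 0" using B by (simp add: algebra_simps)
    have "Rf NR Ns eta (gamma * v) v (eta * q / 2) =
       eta / 2 * (1 - q) + n2 * ln (2 * n2 / v) - real NR * ln q
       + (gamma * v / 2 + v / 2 - eta * q / 2 - real NR - n2)"
      unfolding Rf_def n2_def[symmetric] l1 l2 l3 by (simp add: field_simps)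
    then show ?thesis unfolding I br by simp
  qed
  show "t > 0" if gl: "gamma < (2 * real NR + eta) / (2 * real NR * (real Ns - 1))"
  proof -
    have "q < 1" using F(5) gl by blast
    then have "1 / q > 1" using qp by simp
    then show ?thesis using y by simp
  qed
  fix s assume sy: "1 + 2 * s > 0" and sz: "1 - 2 * s * gamma > 0"
  have h1: "ln (1 + 2 * s) \<le> ln (1 + 2 * t) + q * (2 * s - 2 * t)"
  proof -
    have "ln ((1 + 2 * s) / (1 + 2 * t)) \<le> (1 + 2 * s) / (1 + 2 * t) - 1"
      using sy yp by (intro ln_le_minus_one) simp
    moreover have "ln ((1 + 2 * s) / (1 + 2 * t)) = ln (1 + 2 * s) - ln (1 + 2 * t)"
      using sy yp by (simp add: ln_div)
    moreover have "(1 + 2 * s) / (1 + 2 * t) - 1 = q * (2 * s - 2 * t)"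
    proof -
      have qt: "q * (1 + 2 * t) = 1" using y qp by simp
      have "(1 + 2 * s) / (1 + 2 * t) - 1 = ((1 + 2 * s) - (1 + 2 * t)) / (1 + 2 * t)" using yp by (simp add: field_simps)
      also have "\<dots> = q * ((1 + 2 * s) - (1 + 2 * t))"
      proof -
        have qinv: "q = 1 / (1 + 2 * t)" by (subst y) simp
        show ?thesis by (subst qinv) simp
      qed
      also have "\<dots> = q * (2 * s - 2 * t)" by simp
      finally show ?thesis .
    qed
    ultimately show ?thesis by linarith
  qed
  have h3: "ln (1 - 2 * s * gamma) \<le> ln (1 - 2 * t * gamma) + (v / (2 * n2)) * (- 2 * gamma * (s - t))"
  proof -
    have "ln ((1 - 2 * s * gamma) / (1 - 2 * t * gamma)) \<le> (1 - 2 * s * gamma) / (1 - 2 * t * gamma) - 1"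
      using sz zp by (intro ln_le_minus_one) simp
    moreover have "ln ((1 - 2 * s * gamma) / (1 - 2 * t * gamma)) = ln (1 - 2 * s * gamma) - ln (1 - 2 * t * gamma)"
      using sz zp by (simp add: ln_div)
    moreover have "(1 - 2 * s * gamma) / (1 - 2 * t * gamma) - 1 = (v / (2 * n2)) * (- 2 * gamma * (s - t))"
    proof -
      have "(1 - 2 * s * gamma) / (1 - 2 * t * gamma) - 1 = ((1 - 2 * s * gamma) - (1 - 2 * t * gamma)) / (1 - 2 * t * gamma)"
        using zp by (simp add: field_simps)
      also have "\<dots> = (- 2 * gamma * (s - t)) / (2 * n2 / v)"
      proof -
        have nm: "(1 - 2 * s * gamma) - (1 - 2 * t * gamma) = - 2 * gamma * (s - t)" by (simp add: algebra_simps)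
        show ?thesis unfolding nm by (simp only: z)
      qed
      also have "\<dots> = (v / (2 * n2)) * (- 2 * gamma * (s - t))" by simp
      finally show ?thesis .
    qed
    ultimately show ?thesis by linarith
  qed
  have h2: "s / (1 + 2 * s) \<le> t / (1 + 2 * t) + q^2 * (s - t)"
  proof -
    define yy where "yy = 1 + 2 * s"
    have yyp: "yy > 0" using sy yy_def by simp
    have sq: "(q * yy - 1)^2 / yy \<ge> 0" using yyp by simp
    have e1: "s / (1 + 2 * s) = (1 - 1 / yy) / 2" unfolding yy_def using sy by (simp add: field_simps)
    have e2: "t / (1 + 2 * t) = (1 - q) / 2" unfolding y unfolding t_def tstar_def q_def[symmetric]
      using qp by (simp add: field_simps)
    have e3: "s - t = (yy - 1 / q) / 2" unfolding yy_def using y by (simp add: field_simps)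
    have e4: "(q * yy - 1)^2 / yy = q^2 * yy - 2 * q + 1 / yy" using yyp
      by (simp add: field_simps power2_eq_square)
    have e5: "q^2 * ((yy - 1 / q) / 2) = (q^2 * yy - q) / 2" using qp by (simp add: field_simps power2_eq_square)
    have e6: "0 \<le> q^2 * yy - 2 * q + 1 / yy" using sq e4 by simp
    show ?thesis unfolding e1 e2 e3 e5 using e6 by (simp add: field_simps)
  qed
  have c1: "real NR * ln (1 + 2 * s) \<le> real NR * (ln (1 + 2 * t) + q * (2 * s - 2 * t))"
    using h1 by (intro mult_left_mono) auto
  have c2: "eta * (s / (1 + 2 * s)) \<le> eta * (t / (1 + 2 * t) + q^2 * (s - t))"
    using h2 e by (intro mult_left_mono) auto
  have c3: "n2 * ln (1 - 2 * s * gamma) \<le> n2 * (ln (1 - 2 * t * gamma) + (v / (2 * n2)) * (- 2 * gamma * (s - t)))"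
    using h3 n2p by (intro mult_left_mono) auto
  have lin: "real NR * (q * (2 * s - 2 * t)) + eta * (q^2 * (s - t)) + n2 * ((v / (2 * n2)) * (- 2 * gamma * (s - t))) = 0"
  proof -
    have "n2 * ((v / (2 * n2)) * (- 2 * gamma * (s - t))) = - (gamma * v) * (s - t)" using n2p by (simp add: field_simps)
    then show ?thesis unfolding A by (simp add: algebra_simps power2_eq_square)
  qed
  have "phi NR Ns eta gamma s = real NR * ln (1 + 2 * s) + eta * (s / (1 + 2 * s)) + n2 * ln (1 - 2 * s * gamma)"
    unfolding phi_def n2_def by simp
  also have "\<dots> \<le> real NR * (ln (1 + 2 * t) + q * (2 * s - 2 * t)) + eta * (t / (1 + 2 * t) + q^2 * (s - t))
     + n2 * (ln (1 - 2 * t * gamma) + (v / (2 * n2)) * (- 2 * gamma * (s - t)))"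
    using c1 c2 c3 by linarith
  also have "\<dots> = real NR * ln (1 + 2 * t) + eta * (t / (1 + 2 * t)) + n2 * ln (1 - 2 * t * gamma)
      + (real NR * (q * (2 * s - 2 * t)) + eta * (q^2 * (s - t)) + n2 * ((v / (2 * n2)) * (- 2 * gamma * (s - t))))"
    by (simp add: algebra_simps)
  also have "\<dots> = phi NR Ns eta gamma t" unfolding lin by (simp add: phi_def n2_def)
  finally show "phi NR Ns eta gamma s \<le> phi NR Ns eta gamma t" .
qed

lemma Istar_mono:
  assumes NR: "NR \<ge> 1" and Ns: "Ns \<ge> 2" and g: "gamma > 0"
  shows "mono_on {e. e > 0 \<and> gamma < (2 * real NR + e) / (2 * real NR * (real Ns - 1))}
                   (\<lambda>e. Istar NR Ns e gamma)"
proof (rule mono_onI)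
  fix r s assume r: "r \<in> {e. e > 0 \<and> gamma < (2 * real NR + e) / (2 * real NR * (real Ns - 1))}"
    and s: "s \<in> {e. e > 0 \<and> gamma < (2 * real NR + e) / (2 * real NR * (real Ns - 1))}" and rs: "r \<le> s"
  have rp: "r > 0" and rg: "gamma < (2 * real NR + r) / (2 * real NR * (real Ns - 1))" using r by auto
  have sp: "s > 0" using s by auto
  define t1 where "t1 = tstar NR Ns r gamma"
  note T1 = t_facts[OF NR Ns rp g, folded t1_def]
  note T2 = t_facts[OF NR Ns sp g]
  have t1p: "t1 > 0" using T1(5) rg by blast
  have "Istar NR Ns r gamma = phi NR Ns r gamma t1" using T1(3) by simp
  also have "\<dots> \<le> phi NR Ns s gamma t1"
  proof -
    have "r * t1 / (1 + 2 * t1) \<le> s * t1 / (1 + 2 * t1)"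
      using rs t1p by (intro divide_right_mono mult_right_mono) auto
    then show ?thesis unfolding phi_def by simp
  qed
  also have "\<dots> \<le> phi NR Ns s gamma (tstar NR Ns s gamma)" using T2(6) T1(1,2) by blast
  also have "\<dots> = Istar NR Ns s gamma" using T2(3) by simp
  finally show "Istar NR Ns r gamma \<le> Istar NR Ns s gamma" .
qed



abbreviation ed :: "nat \<Rightarrow> real \<Rightarrow> real" where "ed k x \<equiv> erlang_density k (1/2) x"

definition ww :: "real \<Rightarrow> nat \<Rightarrow> real" where "ww lam j = exp (- lam / 2) * (lam / 2) ^ j / fact j"

definition pm :: "real \<Rightarrow> nat \<Rightarrow> real" where "pm mu n = mu ^ n * exp (- mu) / fact n"

lemma exp_sums_real: "(\<lambda>n. (x::real) ^ n / fact n) sums exp x"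
  using exp_converges[of x] by (simp add: divide_inverse mult.commute scaleR_conv_of_real)

lemma ww_sums: "ww lam sums 1"
proof -
  have "(\<lambda>n. exp (- lam / 2) * ((lam/2) ^ n / fact n)) sums (exp (- lam / 2) * exp (lam / 2))"
    by (intro sums_mult exp_sums_real)
  moreover have "exp (- lam / 2) * exp (lam / 2) = 1" by (simp add: exp_minus field_simps)
  ultimately show ?thesis unfolding ww_def by (simp add: mult.assoc)
qed

lemma ww_nonneg: "lam \<ge> 0 \<Longrightarrow> ww lam j \<ge> 0" unfolding ww_def by simp

lemma chi2_erl:
  assumes "n \<ge> 2"
  shows "chi2_density (2 * real n) x = ed (n - 1) x"
proof (cases "x > 0")
  case True
  have e1: "2 * real n / 2 = real n" by simp
  have p1: "x powr (real n - 1) = x ^ (n - 1)"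
  proof -
    have "real n - 1 = real (n - 1)" using assms by (simp add: of_nat_diff)
    then show ?thesis by (simp only: powr_realpow[OF True])
  qed
  have p2: "2 powr (real n) = 2 ^ n" by (simp add: powr_realpow)
  have g: "Gamma (real n) = fact (n - 1)"
  proof -
    have "real n = 1 + real (n - 1)" using assms by (simp add: of_nat_diff)
    hence "Gamma (real n) = Gamma (1 + real (n - 1))" by (simp only:)

    also have "\<dots> = fact (n - 1)" by (rule Gamma_fact)
    finally show ?thesis .
  qed
  have s: "Suc (n - 1) = n" using assms by simp
  have ex: "exp (- x / 2) = exp (- (1/2) * x)" by simp
  have aux: "a * e / (p * f) = (1 / p) * a * e / f" for a e p f :: real by simp
  have "chi2_density (2 * real n) x = x ^ (n - 1) * exp (- (1/2) * x) / (2 ^ n * fact (n - 1))"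
    unfolding chi2_density_def e1 p1 p2 g ex using True by simp
  also have "\<dots> = (1/2) ^ n * x ^ (n - 1) * exp (- (1/2) * x) / fact (n - 1)"
    by (subst aux) (simp add: power_one_over)
  also have "\<dots> = ed (n - 1) x" unfolding erlang_density_def s using True by simp
  finally show ?thesis .
next
  case False
  then show ?thesis using assms unfolding chi2_density_def erlang_density_def
    by (cases "x = 0") auto
qed

lemma nc_series:
  assumes "m \<ge> 2"
  shows "nc_chi2_density (2 * real m) lam x = (\<Sum>j. ww lam j * ed (m + j - 1) x)"
proof -
  have "exp (- lam/2) * (lam/2) ^ j / fact j * chi2_density (2 * real m + 2 * real j) x = ww lam j * ed (m + j - 1) x" for j
  proof -
    have "2 * real m + 2 * real j = 2 * real (m + j)" by simp
    then show ?thesis using chi2_erl[of "m + j" x] assms unfolding ww_def by simp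
  qed
  then show ?thesis unfolding nc_chi2_density_def by simp
qed

lemma summable_terms:
  assumes lam: "lam \<ge> 0" and m: "m \<ge> 1"
  shows "summable (\<lambda>j. ww lam j * ed (m + j - 1) x)"
proof (cases "x < 0")
  case True
  then show ?thesis by (simp add: erlang_density_def)
next
  case False
  hence x: "x \<ge> 0" by simp
  define K where "K = exp (- lam / 2) * (1/2) ^ m * x ^ (m - 1) * exp (- (1/2) * x)"
  have SG: "summable (\<lambda>j. K * ((lam / 2 * (x / 2)) ^ j / fact j))"
    by (intro summable_mult sums_summable[OF exp_sums_real])
  have BD: "norm (ww lam j * ed (m + j - 1) x) \<le> K * ((lam / 2 * (x / 2)) ^ j / fact j)" for j
  proof -
    have s: "Suc (m + j - 1) = m + j" using m by simp
    have p: "x ^ (m + j - 1) = x ^ (m - 1) * x ^ j" using m by (simp add: power_add[symmetric])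
    have f: "fact (m + j - 1) \<ge> (1::real)" by simp
    have xne: "\<not> x < 0" using x by simp
    have "ww lam j * ed (m + j - 1) x =
        exp (- lam / 2) * (lam / 2) ^ j / fact j * ((1/2) ^ (m + j) * (x ^ (m - 1) * x ^ j) * exp (- (1/2) * x) / fact (m + j - 1))"
      unfolding ww_def erlang_density_def s p using xne by simp
    also have "\<dots> = K * ((lam / 2) ^ j * (1/2) ^ j * x ^ j / fact j) / fact (m + j - 1)"
    proof -
      have aux: "(a::real) * b / f * ((c1*c2) * (d*e) * h / i) = a * c1 * d * h * (b * c2 * e / f) / i"
        for a b f c1 c2 d e h i by (simp add: divide_inverse mult_ac)
      show ?thesis unfolding K_def power_add by (rule aux)
    qed
    also have "\<dots> = K * ((lam / 2 * (x / 2)) ^ j / fact j) / fact (m + j - 1)"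
    proof -
      have x2: "x / 2 = (1/2) * x" by simp
      have "(lam / 2 * (x / 2)) ^ j = (lam / 2) ^ j * ((1/2) ^ j * x ^ j)"
        by (simp only: x2 power_mult_distrib)
      hence "(lam / 2) ^ j * (1/2) ^ j * x ^ j = (lam / 2 * (x / 2)) ^ j" by (simp only: mult.assoc)
      then show ?thesis by simp
    qed
    also have "\<dots> \<le> K * ((lam / 2 * (x / 2)) ^ j / fact j) / 1"
    proof (rule divide_left_mono)
      show "0 \<le> K * ((lam / 2 * (x / 2)) ^ j / fact j)" unfolding K_def using x lam by simp
    qed (use f in auto)
    finally have le: "ww lam j * ed (m + j - 1) x \<le> K * ((lam / 2 * (x / 2)) ^ j / fact j)" by simp
    have nn: "0 \<le> ww lam j * ed (m + j - 1) x" using ww_nonneg[OF lam] by simp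
    show ?thesis using le nn by simp
  qed
  show ?thesis
  proof (rule summable_comparison_test)
    show "\<exists>N. \<forall>n\<ge>N. norm (ww lam n * ed (m + n - 1) x) \<le> K * ((lam / 2 * (x / 2)) ^ n / fact n)"
      using BD by blast
  qed (rule SG)
qed





lemma CDF_le1: "l > 0 \<Longrightarrow> erlang_CDF k l y \<le> 1"
  unfolding erlang_CDF_def by (auto intro!: sum_nonneg)

lemma CDF_summable:
  assumes lam: "lam \<ge> 0"
  shows "summable (\<lambda>j. ww lam j * erlang_CDF (m+j-1) (1/2) y)"
proof (rule summable_comparison_test)
  show "summable (ww lam)" using ww_sums by (rule sums_summable)
  show "\<exists>N. \<forall>n\<ge>N. norm (ww lam n * erlang_CDF (m+n-1) (1/2) y) \<le> ww lam n"
  proof (intro exI allI impI)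
    fix n :: nat
    have a: "0 \<le> erlang_CDF (m+n-1) (1/2) y" by simp
    have b: "erlang_CDF (m+n-1) (1/2) y \<le> 1" by (rule CDF_le1) simp
    have c: "0 \<le> ww lam n" by (rule ww_nonneg[OF lam])
    show "norm (ww lam n * erlang_CDF (m+n-1) (1/2) y) \<le> ww lam n"
      using a b c by (simp add: abs_mult mult_left_le)
  qed
qed

lemma G_eq:
  assumes m: "m \<ge> 2" and lam: "lam \<ge> 0"
  shows "(\<integral> a. indicator {..y} a * nc_chi2_density (2 * real m) lam a \<partial>lborel)
       = (\<Sum>j. ww lam j * erlang_CDF (m+j-1) (1/2) y)"
proof -
  define F where "F a = (\<Sum>j. ww lam j * ed (m+j-1) a)" for a
  have Fnc: "nc_chi2_density (2 * real m) lam a = F a" for a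
    unfolding F_def by (rule nc_series[OF m])
  have sm: "summable (\<lambda>j. ww lam j * ed (m+j-1) a)" for a
    using summable_terms[OF lam] m by simp
  have Fm: "F \<in> borel_measurable lborel" unfolding F_def[abs_def] by measurable
  have term_nn: "0 \<le> ww lam j * ed (m+j-1) a" for j a using ww_nonneg[OF lam] by simp
  have Fnn: "F a \<ge> 0" for a unfolding F_def using sm term_nn by (intro suminf_nonneg) auto
  have "(\<integral> a. indicator {..y} a * nc_chi2_density (2 * real m) lam a \<partial>lborel)
      = (\<integral> a. indicator {..y} a * F a \<partial>lborel)" by (simp add: Fnc)
  also have "\<dots> = enn2real (\<integral>\<^sup>+ a. ennreal (indicator {..y} a * F a) \<partial>lborel)"
    by (rule integral_eq_nn_integral) (use Fm Fnn in auto)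
  also have "(\<integral>\<^sup>+ a. ennreal (indicator {..y} a * F a) \<partial>lborel)
      = (\<integral>\<^sup>+ a. (\<Sum>j. ennreal (ww lam j * (ed (m+j-1) a * indicator {..y} a))) \<partial>lborel)"
  proof (rule nn_integral_cong)
    fix a
    have "indicator {..y} a * F a = (\<Sum>j. ww lam j * (ed (m+j-1) a * indicator {..y} a))"
      unfolding F_def using suminf_mult[OF sm[of a], of "indicator {..y} a"]
      by (simp add: mult_ac)
    moreover have "summable (\<lambda>j. ww lam j * (ed (m+j-1) a * indicator {..y} a))"
      using summable_mult2[OF sm[of a], of "indicator {..y} a"] by (simp add: mult_ac)
    ultimately show "ennreal (indicator {..y} a * F a) = (\<Sum>j. ennreal (ww lam j * (ed (m+j-1) a * indicator {..y} a)))"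
      using term_nn by (subst suminf_ennreal2) (auto simp: indicator_def)
  qed
  also have "\<dots> = (\<Sum>j. \<integral>\<^sup>+ a. ennreal (ww lam j * (ed (m+j-1) a * indicator {..y} a)) \<partial>lborel)"
    by (rule nn_integral_suminf) measurable
  also have "\<dots> = (\<Sum>j. ennreal (ww lam j * erlang_CDF (m+j-1) (1/2) y))"
  proof (rule suminf_cong)
    fix j
    have "(\<integral>\<^sup>+ a. ennreal (ww lam j * (ed (m+j-1) a * indicator {..y} a)) \<partial>lborel)
        = (\<integral>\<^sup>+ a. ennreal (ww lam j) * (ennreal (ed (m+j-1) a) * indicator {..y} a) \<partial>lborel)"
      using ww_nonneg[OF lam, of j]
      by (intro nn_integral_cong) (auto simp: ennreal_mult split: split_indicator)
    also have "\<dots> = ennreal (ww lam j) * (\<integral>\<^sup>+ a. ennreal (ed (m+j-1) a) * indicator {..y} a \<partial>lborel)"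
      by (rule nn_integral_cmult) measurable
    also have "\<dots> = ennreal (ww lam j) * ennreal (erlang_CDF (m+j-1) (1/2) y)"
      by (subst nn_integral_erlang_density) auto
    also have "\<dots> = ennreal (ww lam j * erlang_CDF (m+j-1) (1/2) y)"
      using ww_nonneg[OF lam, of j] by (simp add: ennreal_mult)
    finally show "(\<integral>\<^sup>+ a. ennreal (ww lam j * (ed (m+j-1) a * indicator {..y} a)) \<partial>lborel)
        = ennreal (ww lam j * erlang_CDF (m+j-1) (1/2) y)" .
  qed
  also have "\<dots> = ennreal (\<Sum>j. ww lam j * erlang_CDF (m+j-1) (1/2) y)"
    using CDF_summable[OF lam] ww_nonneg[OF lam] by (intro suminf_ennreal2) auto
  finally show ?thesis
    using CDF_summable[OF lam] ww_nonneg[OF lam] by (simp add: suminf_nonneg)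
qed


definition SS :: "nat \<Rightarrow> real \<Rightarrow> real \<Rightarrow> real" where
  "SS m lam y = (\<Sum>j. ww lam j * erlang_CDF (m+j-1) (1/2) y)"

lemma SS_nonneg: "lam \<ge> 0 \<Longrightarrow> SS m lam y \<ge> 0"
  unfolding SS_def using CDF_summable ww_nonneg by (intro suminf_nonneg) auto

lemma SS_meas: "(\<lambda>b. SS m lam (gamma * b)) \<in> borel_measurable lborel"
  unfolding SS_def erlang_CDF_def by measurable

lemma p_eq:
  assumes NR: "NR \<ge> 1" and Ns: "Ns \<ge> 2" and L: "L \<ge> 2" and e: "eta \<ge> 0"
  shows "p_miss NR Ns L eta gamma
     = (\<integral> b. ed (NR*L*(Ns-1) - 1) b * SS (NR*L) (real L * eta) (gamma * b) \<partial>lborel)"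
proof -
  have m1: "NR * L \<ge> 2" using NR L by (metis le_trans mult_le_mono mult_1 le_refl)
  have m2: "NR * L * (Ns - 1) \<ge> 2" using m1 Ns
    by (metis le_trans mult_le_mono2 mult_1_right Suc_le_eq diff_Suc_1 Suc_1 le_diff_conv2 one_le_numeral add_leD2 nat_le_linear)
  have lam: "real L * eta \<ge> 0" using e by simp
  have pos: "2 * real NR * real L * (real Ns - 1) \<noteq> 0" using NR L Ns by auto
  have xx: "(real Ns - 1) * gamma * (2 * real NR * real L) / (2 * real NR * real L * (real Ns - 1)) * b = gamma * b" for b
    using pos by (simp add: field_simps)
  have c1: "2 * real NR * real L = 2 * real (NR * L)" by simp
  have c2: "2 * real NR * real L * (real Ns - 1) = 2 * real (NR * L * (Ns - 1))"
    using Ns by (simp add: of_nat_diff)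
  show ?thesis
    unfolding p_miss_def ncF_cdf_def xx
    apply (rule Bochner_Integration.integral_cong[OF refl])
    apply (subst c2, subst chi2_erl[OF m2])
    apply (subst c1, subst G_eq[OF m1 lam])
    apply (simp add: SS_def)
    done
qed

lemma p_nn:
  assumes NR: "NR \<ge> 1" and Ns: "Ns \<ge> 2" and L: "L \<ge> 2" and e: "eta \<ge> 0"
  shows "p_miss NR Ns L eta gamma
     = enn2real (\<integral>\<^sup>+ b. ennreal (ed (NR*L*(Ns-1) - 1) b * SS (NR*L) (real L * eta) (gamma * b)) \<partial>lborel)"
  unfolding p_eq[OF assms]
  by (rule integral_eq_nn_integral) (use SS_meas SS_nonneg e in auto)


lemma ed_tilt:
  assumes u: "1 + 2 * s > 0"
  shows "ed k a * exp (c - s * a) = exp c / (1 + 2 * s) ^ (k+1) * erlang_density k ((1 + 2 * s) / 2) a"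
proof (cases "a < 0")
  case True then show ?thesis by (simp add: erlang_density_def)
next
  case False
  have e: "exp (- (1/2) * a) * exp (c - s * a) = exp c * exp (- ((1 + 2 * s) / 2) * a)"
    by (simp add: exp_add[symmetric] algebra_simps)
  have p: "((1 + 2 * s) / 2) ^ (k+1) / (1 + 2 * s) ^ (k+1) = (1/2) ^ (k+1)"
    using u by (simp add: power_divide power_one_over)
  have "ed k a * exp (c - s * a) = (1/2) ^ (k+1) * a ^ k * (exp (- (1/2) * a) * exp (c - s * a)) / fact k"
    using False by (simp add: erlang_density_def)
  also have "\<dots> = ((1 + 2 * s) / 2) ^ (k+1) / (1 + 2 * s) ^ (k+1) * a ^ k * (exp c * exp (- ((1 + 2 * s) / 2) * a)) / fact k"
    unfolding e p ..
  also have "\<dots> = exp c / (1 + 2 * s) ^ (k+1) * (((1 + 2 * s) / 2) ^ (k+1) * a ^ k * exp (- ((1 + 2 * s) / 2) * a) / fact k)"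
  proof -
    have aux: "(A / B) * P * (E * F) / f = E / B * (A * P * F / f)" for A B P E F f :: real
      by (simp add: divide_inverse mult_ac)
    show ?thesis by (rule aux)
  qed
  also have "\<dots> = exp c / (1 + 2 * s) ^ (k+1) * erlang_density k ((1 + 2 * s) / 2) a"
    using False unfolding erlang_density_def by simp
  finally show ?thesis .
qed

lemma nn_ed_tilt:
  assumes u: "1 + 2 * s > 0"
  shows "(\<integral>\<^sup>+ a. ennreal (ed k a * exp (c - s * a)) \<partial>lborel) = ennreal (exp c / (1 + 2 * s) ^ (k+1))"
proof -
  have l: "(1 + 2 * s) / 2 > 0" using u by simp
  have "(\<integral>\<^sup>+ a. ennreal (ed k a * exp (c - s * a)) \<partial>lborel)
      = (\<integral>\<^sup>+ a. ennreal (exp c / (1 + 2 * s) ^ (k+1)) * ennreal (erlang_density k ((1 + 2 * s) / 2) a) \<partial>lborel)"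
    apply (intro nn_integral_cong)
    apply (subst ed_tilt[OF u])
    apply (rule ennreal_mult)
    using u l by auto
  also have "\<dots> = ennreal (exp c / (1 + 2 * s) ^ (k+1)) * (\<integral>\<^sup>+ a. ennreal (erlang_density k ((1 + 2 * s) / 2) a) \<partial>lborel)"
    by (rule nn_integral_cmult) measurable
  also have "(\<integral>\<^sup>+ a. ennreal (erlang_density k ((1 + 2 * s) / 2) a) \<partial>lborel) = 1"
    using nn_integral_erlang_ith_moment[OF l, of k 0] by simp
  finally show ?thesis by simp
qed

lemma CDF_mgf:
  assumes t: "t \<ge> 0"
  shows "erlang_CDF k (1/2) y \<le> exp (t * y) / (1 + 2 * t) ^ (k+1)"
proof -
  have "ennreal (erlang_CDF k (1/2) y) = (\<integral>\<^sup>+ a. ennreal (ed k a) * indicator {..y} a \<partial>lborel)"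
    by (subst nn_integral_erlang_density) auto
  also have "\<dots> \<le> (\<integral>\<^sup>+ a. ennreal (ed k a * exp (t * y - t * a)) \<partial>lborel)"
  proof (rule nn_integral_mono)
    fix a
    show "ennreal (ed k a) * indicator {..y} a \<le> ennreal (ed k a * exp (t * y - t * a))"
    proof (cases "a \<le> y")
      case True
      have "t * a \<le> t * y" using t True by (rule mult_left_mono[rotated])
      hence "1 \<le> exp (t * y - t * a)" by simp
      hence "ed k a * 1 \<le> ed k a * exp (t * y - t * a)" by (intro mult_left_mono) auto
      then show ?thesis using True by simp
    qed simp
  qed
  also have "\<dots> = ennreal (exp (t * y) / (1 + 2 * t) ^ (k+1))"
    using t by (intro nn_ed_tilt) simp
  finally have h: "ennreal (erlang_CDF k (1/2) y) \<le> ennreal (exp (t * y) / (1 + 2 * t) ^ (k+1))" .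
  have Bnn: "0 \<le> exp (t * y) / (1 + 2 * t) ^ (k+1)" using t by simp
  show ?thesis using ennreal_le_iff[OF Bnn] h by blast
qed

lemma SS_bound:
  assumes t: "t \<ge> 0" and lam: "lam \<ge> 0" and m: "m \<ge> 1"
  shows "SS m lam y \<le> exp (t * y) * exp (- lam * t / (1 + 2 * t)) / (1 + 2 * t) ^ m"
proof -
  define u where "u = 1 + 2 * t"
  have u: "u > 0" "u \<ge> 1" using t unfolding u_def by auto
  define K where "K = exp (t * y) * exp (- lam / 2) / u ^ m"
  have eqj: "ww lam j * (exp (t * y) / u ^ (m + j - 1 + 1)) = K * ((lam / (2 * u)) ^ j / fact j)" for j
  proof -
    have "m + j - 1 + 1 = m + j" using m by simp
    then show ?thesis unfolding ww_def K_def using u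
      by (simp add: power_add power_divide power_mult_distrib field_simps)
  qed
  have sm2: "(\<lambda>j. ww lam j * (exp (t * y) / u ^ (m + j - 1 + 1))) sums (K * exp (lam / (2 * u)))"
    unfolding eqj by (intro sums_mult exp_sums_real)
  have "SS m lam y \<le> (\<Sum>j. ww lam j * (exp (t * y) / u ^ (m + j - 1 + 1)))"
    unfolding SS_def
  proof (rule suminf_le)
    fix j show "ww lam j * erlang_CDF (m+j-1) (1/2) y \<le> ww lam j * (exp (t * y) / u ^ (m + j - 1 + 1))"
      using CDF_mgf[OF t, of "m+j-1" y] ww_nonneg[OF lam, of j] unfolding u_def
      by (intro mult_left_mono) auto
  qed (use CDF_summable[OF lam] sums_summable[OF sm2] in auto)
  also have "\<dots> = K * exp (lam / (2 * u))" using sm2 by (rule sums_unique[symmetric])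
  also have "\<dots> = exp (t * y) * exp (- lam * t / (1 + 2 * t)) / (1 + 2 * t) ^ m"
  proof -
    have "- lam / 2 + lam / (2 * u) = - lam * t / u" using u unfolding u_def by (simp add: field_simps)
    then have "exp (- lam / 2) * exp (lam / (2 * u)) = exp (- lam * t / u)" by (simp add: exp_add[symmetric])
    then show ?thesis unfolding K_def u_def by (simp add: mult_ac)
  qed
  finally show ?thesis .
qed

lemma upper_nn:
  assumes t: "t \<ge> 0" and lam: "lam \<ge> 0" and m1: "m1 \<ge> 1" and m2: "m2 \<ge> 1"
    and g: "gamma > 0" and z: "1 - 2 * t * gamma > 0"
  shows "(\<integral>\<^sup>+ b. ennreal (ed (m2 - 1) b * SS m1 lam (gamma * b)) \<partial>lborel)
     \<le> ennreal (exp (- lam * t / (1 + 2 * t)) / (1 + 2 * t) ^ m1 / (1 - 2 * t * gamma) ^ m2)"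
proof -
  define C where "C = exp (- lam * t / (1 + 2 * t)) / (1 + 2 * t) ^ m1"
  have Cp: "C \<ge> 0" unfolding C_def using t by simp
  have "(\<integral>\<^sup>+ b. ennreal (ed (m2 - 1) b * SS m1 lam (gamma * b)) \<partial>lborel)
      \<le> (\<integral>\<^sup>+ b. ennreal C * ennreal (ed (m2 - 1) b * exp (0 - (- t * gamma) * b)) \<partial>lborel)"
  proof (rule nn_integral_mono)
    fix b
    have "SS m1 lam (gamma * b) \<le> exp (t * (gamma * b)) * C"
      using SS_bound[OF t lam m1, of "gamma * b"] unfolding C_def by (simp add: mult_ac)
    hence "ed (m2 - 1) b * SS m1 lam (gamma * b) \<le> ed (m2 - 1) b * (exp (t * (gamma * b)) * C)"
      by (intro mult_left_mono) auto
    also have "\<dots> = C * (ed (m2 - 1) b * exp (0 - (- t * gamma) * b))" by (simp add: mult_ac)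
    finally show "ennreal (ed (m2 - 1) b * SS m1 lam (gamma * b)) \<le> ennreal C * ennreal (ed (m2 - 1) b * exp (0 - (- t * gamma) * b))"
      using Cp by (simp add: ennreal_mult[symmetric] ennreal_leI)
  qed
  also have "\<dots> = ennreal C * (\<integral>\<^sup>+ b. ennreal (ed (m2 - 1) b * exp (0 - (- t * gamma) * b)) \<partial>lborel)"
    by (rule nn_integral_cmult) measurable
  also have "(\<integral>\<^sup>+ b. ennreal (ed (m2 - 1) b * exp (0 - (- t * gamma) * b)) \<partial>lborel)
      = ennreal (exp 0 / (1 + 2 * (- t * gamma)) ^ (m2 - 1 + 1))"
    using z by (intro nn_ed_tilt) simp
  also have "ennreal C * ennreal (exp 0 / (1 + 2 * (- t * gamma)) ^ (m2 - 1 + 1))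
      = ennreal (exp (- lam * t / (1 + 2 * t)) / (1 + 2 * t) ^ m1 / (1 - 2 * t * gamma) ^ m2)"
  proof -
    have "m2 - 1 + 1 = m2" using m2 by simp
    moreover have "1 + 2 * (- t * gamma) = 1 - 2 * t * gamma" by simp
    ultimately have "C * (exp 0 / (1 + 2 * (- t * gamma)) ^ (m2 - 1 + 1)) = exp (- lam * t / (1 + 2 * t)) / (1 + 2 * t) ^ m1 / (1 - 2 * t * gamma) ^ m2"
      unfolding C_def by (simp add: mult.assoc)
    moreover have "ennreal C * ennreal (exp 0 / (1 + 2 * (- t * gamma)) ^ (m2 - 1 + 1)) = ennreal (C * (exp 0 / (1 + 2 * (- t * gamma)) ^ (m2 - 1 + 1)))"
      using Cp z by (intro ennreal_mult[symmetric]) auto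
    ultimately show ?thesis by simp
  qed
  finally show ?thesis .
qed



lemma CDF_mono:
  assumes "y1 \<le> y2"
  shows "erlang_CDF k (1/2) y1 \<le> erlang_CDF k (1/2) y2"
proof -
  have "ennreal (erlang_CDF k (1/2) y1) = (\<integral>\<^sup>+ a. ennreal (ed k a) * indicator {..y1} a \<partial>lborel)"
    by (subst nn_integral_erlang_density) auto
  also have "\<dots> \<le> (\<integral>\<^sup>+ a. ennreal (ed k a) * indicator {..y2} a \<partial>lborel)"
    using assms by (intro nn_integral_mono) (auto split: split_indicator)
  also have "\<dots> = ennreal (erlang_CDF k (1/2) y2)"
    by (subst nn_integral_erlang_density) auto
  finally show ?thesis by (simp add: ennreal_le_iff)
qed

lemma pm_sum_le1:
  assumes "y \<ge> 0"
  shows "(\<Sum>n\<le>K. pm (y/2) n) \<le> 1"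
proof -
  have "(\<Sum>n\<le>K. pm (y/2) n) = exp (- (y/2)) * (\<Sum>n\<le>K. (y/2) ^ n / fact n)"
    unfolding pm_def sum_distrib_left by (intro sum.cong) (auto simp: field_simps)
  also have "\<dots> \<le> exp (- (y/2)) * exp (y/2)"
  proof (intro mult_left_mono)
    have "(\<Sum>n\<le>K. (y/2) ^ n / fact n) \<le> (\<Sum>n. (y/2) ^ n / fact n)"
      by (rule sum_le_suminf[OF sums_summable[OF exp_sums_real]]) (auto simp: assms)
    then show "(\<Sum>n\<le>K. (y/2) ^ n / fact n) \<le> exp (y/2)"
      using sums_unique[OF exp_sums_real[of "y/2"]] by simp
  qed simp
  also have "\<dots> = 1" by (simp add: exp_minus field_simps)
  finally show ?thesis .
qed

lemma CDF_alt:
  assumes "y \<ge> 0"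
  shows "erlang_CDF k (1/2) y = 1 - (\<Sum>n\<le>k. pm (y/2) n)"
  using assms unfolding erlang_CDF_def pm_def by (simp add: mult.commute)

lemma CDF_lower:
  assumes y: "y \<ge> 0"
  shows "pm (y/2) (k+1) \<le> erlang_CDF k (1/2) y"
  using pm_sum_le1[OF y, of "k+1"] CDF_alt[OF y, of k] by simp

lemma tail_lower:
  assumes B: "B \<ge> 0"
  shows "ennreal (pm (B/2) k) \<le> (\<integral>\<^sup>+ b. ennreal (ed k b) * indicator {B<..} b \<partial>lborel)"
proof -
  define X where "X = (\<integral>\<^sup>+ b. ennreal (ed k b) * indicator {B<..} b \<partial>lborel)"
  define c where "c = erlang_CDF k (1/2) B"
  have "(\<integral>\<^sup>+ b. ennreal (ed k b) * indicator {..B} b \<partial>lborel) + X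
      = (\<integral>\<^sup>+ b. ennreal (ed k b) * indicator {..B} b + ennreal (ed k b) * indicator {B<..} b \<partial>lborel)"
    unfolding X_def by (rule nn_integral_add[symmetric]) measurable
  also have "\<dots> = (\<integral>\<^sup>+ b. ennreal (erlang_density k (1/2) b * b ^ 0) \<partial>lborel)"
    by (intro nn_integral_cong) (auto split: split_indicator)
  also have "\<dots> = 1" by (subst nn_integral_erlang_ith_moment) auto
  finally have eq: "ennreal c + X = 1"
    unfolding c_def by (subst (asm) nn_integral_erlang_density) auto
  have "pm (B/2) k \<le> (\<Sum>n\<le>k. pm (B/2) n)"
    using B by (intro member_le_sum) (auto simp: pm_def)
  hence "c + pm (B/2) k \<le> 1" unfolding c_def CDF_alt[OF B] by simp
  moreover have "c \<ge> 0" unfolding c_def by simp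
  moreover have "pm (B/2) k \<ge> 0" using B by (simp add: pm_def)
  ultimately have "ennreal c + ennreal (pm (B/2) k) \<le> ennreal c + X"
    unfolding eq by (simp add: ennreal_plus[symmetric] del: ennreal_plus)
  then show ?thesis unfolding X_def by (simp add: ennreal_add_left_cancel_le)
qed

lemma lower_nn:
  assumes lam: "lam \<ge> 0" and m1: "m1 \<ge> 1" and g: "gamma > 0"
    and A: "A \<ge> 0" and B: "B \<ge> 0" and AB: "A \<le> gamma * B"
  shows "ennreal (ww lam j * pm (A/2) (m1+j) * pm (B/2) (m2-1))
     \<le> (\<integral>\<^sup>+ b. ennreal (ed (m2 - 1) b * SS m1 lam (gamma * b)) \<partial>lborel)"
proof -
  define c0 where "c0 = ww lam j * pm (A/2) (m1+j)"
  have c0: "c0 \<ge> 0" unfolding c0_def using ww_nonneg[OF lam] A by (simp add: pm_def)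
  have pmB: "pm (B/2) (m2-1) \<ge> 0" using B by (simp add: pm_def)
  have "ennreal (ww lam j * pm (A/2) (m1+j) * pm (B/2) (m2-1)) = ennreal (c0 * pm (B/2) (m2-1))"
    unfolding c0_def by (simp only:)
  also have "\<dots> = ennreal c0 * ennreal (pm (B/2) (m2-1))" by (rule ennreal_mult[OF c0 pmB])
  also have "\<dots> \<le> ennreal c0 * (\<integral>\<^sup>+ b. ennreal (ed (m2 - 1) b) * indicator {B<..} b \<partial>lborel)"
    by (intro mult_left_mono tail_lower B) simp
  also have "\<dots> = (\<integral>\<^sup>+ b. ennreal c0 * (ennreal (ed (m2 - 1) b) * indicator {B<..} b) \<partial>lborel)"
    by (rule nn_integral_cmult[symmetric]) measurable
  also have "\<dots> \<le> (\<integral>\<^sup>+ b. ennreal (ed (m2 - 1) b * SS m1 lam (gamma * b)) \<partial>lborel)"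
  proof (rule nn_integral_mono)
    fix b
    show "ennreal c0 * (ennreal (ed (m2 - 1) b) * indicator {B<..} b) \<le> ennreal (ed (m2 - 1) b * SS m1 lam (gamma * b))"
    proof (cases "b > B")
      case True
      have "A \<le> gamma * b" using AB True g by (smt (verit) mult_left_mono)
      hence "pm (A/2) (m1+j) \<le> erlang_CDF (m1+j-1) (1/2) (gamma * b)"
        using CDF_lower[OF A, of "m1+j-1"] CDF_mono[of A "gamma * b" "m1+j-1"] m1 by simp
      hence "c0 \<le> ww lam j * erlang_CDF (m1+j-1) (1/2) (gamma * b)"
        unfolding c0_def using ww_nonneg[OF lam] by (intro mult_left_mono) auto
      also have "\<dots> \<le> SS m1 lam (gamma * b)"
        unfolding SS_def
        using sum_le_suminf[OF CDF_summable[OF lam, of m1 "gamma * b"], of "{j}"] ww_nonneg[OF lam]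
        by simp
      finally have "ed (m2 - 1) b * c0 \<le> ed (m2 - 1) b * SS m1 lam (gamma * b)"
        by (intro mult_left_mono) auto
      hence "ennreal (ed (m2 - 1) b * c0) \<le> ennreal (ed (m2 - 1) b * SS m1 lam (gamma * b))"
        by (rule ennreal_leI)
      moreover have "ennreal (ed (m2 - 1) b * c0) = ennreal c0 * (ennreal (ed (m2 - 1) b) * indicator {B<..} b)"
        using True c0 by (simp add: ennreal_mult mult.commute)
      ultimately show ?thesis by simp
    qed simp
  qed
  finally show ?thesis .
qed



lemma ratio_floor:
  assumes c: "c > 0"
  shows "(\<lambda>L. real (nat \<lfloor>c * real L\<rfloor>) / real L) \<longlonglongrightarrow> c"
proof (rule tendsto_sandwich)
  have inv: "(\<lambda>L::nat. 1 / real L) \<longlonglongrightarrow> 0" by real_asymp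
  show "(\<lambda>L. c - 1 / real L) \<longlonglongrightarrow> c" using tendsto_diff[OF tendsto_const inv, of c] by simp
  show "(\<lambda>L. c) \<longlonglongrightarrow> c" by simp
  show "\<forall>\<^sub>F L in sequentially. c - 1 / real L \<le> real (nat \<lfloor>c * real L\<rfloor>) / real L"
  proof (rule eventually_sequentiallyI[of 1])
    fix L :: nat assume L: "L \<ge> 1"
    have nn: "0 \<le> c * real L" using c by simp
    have "c * real L - 1 \<le> real (nat \<lfloor>c * real L\<rfloor>)"
      using real_of_int_floor_gt_diff_one[of "c * real L"] nn by simp
    hence "(c * real L - 1) / real L \<le> real (nat \<lfloor>c * real L\<rfloor>) / real L"
      by (rule divide_right_mono) simp
    moreover have "c - 1 / real L = (c * real L - 1) / real L" using L by (simp add: field_simps)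
    ultimately show "c - 1 / real L \<le> real (nat \<lfloor>c * real L\<rfloor>) / real L" by simp
  qed
  show "\<forall>\<^sub>F L in sequentially. real (nat \<lfloor>c * real L\<rfloor>) / real L \<le> c"
  proof (rule eventually_sequentiallyI[of 1])
    fix L :: nat assume L: "L \<ge> 1"
    have nn: "0 \<le> c * real L" using c by simp
    have "real (nat \<lfloor>c * real L\<rfloor>) \<le> c * real L"
      using of_int_floor_le[of "c * real L"] nn by simp
    then show "real (nat \<lfloor>c * real L\<rfloor>) / real L \<le> c"
      using L by (simp add: field_simps)
  qed
qed

lemma ratio_floor2:
  assumes c: "c > 0"
  shows "(\<lambda>L. real (NR * L + nat \<lfloor>c * real L\<rfloor>) / real L) \<longlonglongrightarrow> real NR + c"
proof -
  have "(\<lambda>L. real NR + real (nat \<lfloor>c * real L\<rfloor>) / real L) \<longlonglongrightarrow> real NR + c"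
    by (intro tendsto_intros ratio_floor c)
  moreover have "\<forall>\<^sub>F L in sequentially. real NR + real (nat \<lfloor>c * real L\<rfloor>) / real L = real (NR * L + nat \<lfloor>c * real L\<rfloor>) / real L"
    by (rule eventually_sequentiallyI[of 1]) (simp add: field_simps)
  ultimately show ?thesis by (rule Lim_transform_eventually)
qed

lemma ratio_m2:
  assumes "NR \<ge> 1" "Ns \<ge> 2"
  shows "(\<lambda>L. real (NR * L * (Ns - 1) - 1) / real L) \<longlonglongrightarrow> real NR * (real Ns - 1)"
proof -
  have inv: "(\<lambda>L::nat. 1 / real L) \<longlonglongrightarrow> 0" by real_asymp
  have "(\<lambda>L. real NR * (real Ns - 1) - 1 / real L) \<longlonglongrightarrow> real NR * (real Ns - 1) - 0"
    by (intro tendsto_intros inv)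
  moreover have "\<forall>\<^sub>F L in sequentially. real NR * (real Ns - 1) - 1 / real L = real (NR * L * (Ns - 1) - 1) / real L"
  proof (rule eventually_sequentiallyI[of 1])
    fix L :: nat assume L: "L \<ge> 1"
    have "NR * L * (Ns - 1) \<ge> 1" using assms L by simp
    hence "real (NR * L * (Ns - 1) - 1) = real NR * real L * (real Ns - 1) - 1"
      using assms by (simp add: of_nat_diff)
    then show "real NR * (real Ns - 1) - 1 / real L = real (NR * L * (Ns - 1) - 1) / real L"
      using L by (simp add: field_simps)
  qed
  ultimately show ?thesis by (simp add: Lim_transform_eventually)
qed

lemma bounds_L:
  assumes NR: "NR \<ge> 1" and Ns: "Ns \<ge> 2" and L: "L \<ge> 2" and e: "eta > 0" and g: "gamma > 0"
    and t: "t \<ge> 0" and z: "1 - 2 * t * gamma > 0" and c: "c > 0" and a: "a > 0" and b: "b > 0"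
    and ab: "a \<le> gamma * b"
  shows "phi NR Ns eta gamma t \<le> - (1 / real L) * ln (p_miss NR Ns L eta gamma)"
    and "- (1 / real L) * ln (p_miss NR Ns L eta gamma) \<le>
         (Tf (eta / 2 * real L) (nat \<lfloor>c * real L\<rfloor>)
          + Tf (a / 2 * real L) (NR * L + nat \<lfloor>c * real L\<rfloor>)
          + Tf (b / 2 * real L) (NR * L * (Ns - 1) - 1)) / real L"
proof -
  define m1 where "m1 = NR * L"
  define m2 where "m2 = NR * L * (Ns - 1)"
  define lam where "lam = real L * eta"
  define j where "j = nat \<lfloor>c * real L\<rfloor>"
  define P where "P = (\<integral>\<^sup>+ b. ennreal (ed (m2 - 1) b * SS m1 lam (gamma * b)) \<partial>lborel)"
  have Lp: "real L > 0" using L by simp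
  have m1p: "m1 \<ge> 1" unfolding m1_def using NR L by simp
  have m2p: "m2 \<ge> 1" unfolding m2_def using NR L Ns by simp
  have lamp: "lam > 0" unfolding lam_def using Lp e by simp
  have u: "1 + 2 * t > 0" using t by simp
  have p: "p_miss NR Ns L eta gamma = enn2real P"
    unfolding P_def m1_def m2_def lam_def using p_nn[OF NR Ns L] e by simp
  define U where "U = exp (- lam * t / (1 + 2 * t)) / (1 + 2 * t) ^ m1 / (1 - 2 * t * gamma) ^ m2"
  have Up: "U > 0" unfolding U_def using u z by simp
  have up: "P \<le> ennreal U" unfolding P_def U_def by (rule upper_nn[OF t _ m1p m2p g z]) (use lamp in simp)
  define A where "A = a * real L"
  define B where "B = b * real L"
  have Ap: "A > 0" and Bp: "B > 0" unfolding A_def B_def using a b Lp by auto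
  have AB: "A \<le> gamma * B" unfolding A_def B_def using ab Lp by (simp add: mult_right_mono mult.assoc[symmetric])
  define Lo where "Lo = ww lam j * pm (A/2) (m1+j) * pm (B/2) (m2-1)"
  have lo: "ennreal Lo \<le> P" unfolding Lo_def P_def
    by (rule lower_nn) (use lamp m1p g Ap Bp AB in auto)
  have Lop: "Lo > 0" unfolding Lo_def ww_def pm_def using lamp Ap Bp by simp
  have Ptop: "P < top" using up by (metis ennreal_less_top le_less_trans)
  have pU: "p_miss NR Ns L eta gamma \<le> U" unfolding p using Up up by (intro enn2real_leI) auto
  have pLo: "Lo \<le> p_miss NR Ns L eta gamma"
    unfolding p using enn2real_mono[OF lo Ptop] Lop by simp
  have pp: "p_miss NR Ns L eta gamma > 0" using pLo Lop by simp
  have lnU: "ln U = - real L * phi NR Ns eta gamma t"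
  proof -
    have "ln U = - lam * t / (1 + 2 * t) - real m1 * ln (1 + 2 * t) - real m2 * ln (1 - 2 * t * gamma)"
      unfolding U_def using u z by (simp add: ln_div ln_realpow ln_mult)
    moreover have "real m1 = real NR * real L" unfolding m1_def by simp
    moreover have "real m2 = real NR * real L * (real Ns - 1)" unfolding m2_def using Ns by (simp add: of_nat_diff)
    ultimately show ?thesis unfolding phi_def lam_def by (simp add: algebra_simps)
  qed
  have "ln (p_miss NR Ns L eta gamma) \<le> ln U" using pU pp by simp
  hence "- (1 / real L) * ln U \<le> - (1 / real L) * ln (p_miss NR Ns L eta gamma)"
    using Lp by (simp add: divide_right_mono)
  then show "phi NR Ns eta gamma t \<le> - (1 / real L) * ln (p_miss NR Ns L eta gamma)"
    unfolding lnU using Lp by simp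
  have w_pm: "ww lam j = pm (eta / 2 * real L) j" unfolding ww_def pm_def lam_def by (simp add: mult_ac)
  have t1: "ln (ww lam j) \<ge> - Tf (eta / 2 * real L) j"
    unfolding w_pm pm_def by (rule ln_pm_ge) (use e Lp in simp)
  have t2: "ln (pm (A/2) (m1+j)) \<ge> - Tf (a / 2 * real L) (NR * L + nat \<lfloor>c * real L\<rfloor>)"
  proof -
    have "A / 2 = a / 2 * real L" unfolding A_def by simp
    then show ?thesis unfolding pm_def m1_def j_def by (metis ln_pm_ge half_gt_zero[OF Ap])
  qed
  have t3: "ln (pm (B/2) (m2-1)) \<ge> - Tf (b / 2 * real L) (NR * L * (Ns - 1) - 1)"
  proof -
    have "B / 2 = b / 2 * real L" unfolding B_def by simp
    then show ?thesis unfolding pm_def m2_def by (metis ln_pm_ge half_gt_zero[OF Bp])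
  qed
  have wp: "ww lam j > 0" unfolding ww_def using lamp by simp
  have pA: "pm (A/2) (m1+j) > 0" unfolding pm_def using Ap by simp
  have pB: "pm (B/2) (m2-1) > 0" unfolding pm_def using Bp by simp
  have "ln Lo = ln (ww lam j) + ln (pm (A/2) (m1+j)) + ln (pm (B/2) (m2-1))"
    unfolding Lo_def using wp pA pB by (simp add: ln_mult)
  hence "ln Lo \<ge> - (Tf (eta / 2 * real L) (nat \<lfloor>c * real L\<rfloor>)
          + Tf (a / 2 * real L) (NR * L + nat \<lfloor>c * real L\<rfloor>)
          + Tf (b / 2 * real L) (NR * L * (Ns - 1) - 1))"
    using t1 t2 t3 unfolding j_def by linarith
  moreover have "ln Lo \<le> ln (p_miss NR Ns L eta gamma)" using pLo Lop by simp
  ultimately have "- ln (p_miss NR Ns L eta gamma) \<le> (Tf (eta / 2 * real L) (nat \<lfloor>c * real L\<rfloor>)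
          + Tf (a / 2 * real L) (NR * L + nat \<lfloor>c * real L\<rfloor>)
          + Tf (b / 2 * real L) (NR * L * (Ns - 1) - 1))" by linarith
  hence "(- ln (p_miss NR Ns L eta gamma)) / real L \<le> (Tf (eta / 2 * real L) (nat \<lfloor>c * real L\<rfloor>)
          + Tf (a / 2 * real L) (NR * L + nat \<lfloor>c * real L\<rfloor>)
          + Tf (b / 2 * real L) (NR * L * (Ns - 1) - 1)) / real L"
    by (rule divide_right_mono) (use Lp in simp)
  then show "- (1 / real L) * ln (p_miss NR Ns L eta gamma) \<le>
         (Tf (eta / 2 * real L) (nat \<lfloor>c * real L\<rfloor>)
          + Tf (a / 2 * real L) (NR * L + nat \<lfloor>c * real L\<rfloor>)
          + Tf (b / 2 * real L) (NR * L * (Ns - 1) - 1)) / real L"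
    by simp
qed


lemma limit_gen:
  assumes NR: "NR \<ge> 1" and Ns: "Ns \<ge> 2" and e: "eta > 0" and g: "gamma > 0"
    and t: "t \<ge> 0" and z: "1 - 2 * t * gamma > 0" and c: "c > 0" and a: "a > 0" and b: "b > 0"
    and ab: "a \<le> gamma * b" and eq: "phi NR Ns eta gamma t = Rf NR Ns eta a b c"
  shows "(\<lambda>L. - (1 / real L) * ln (p_miss NR Ns L eta gamma)) \<longlonglongrightarrow> phi NR Ns eta gamma t"
proof (rule tendsto_sandwich)
  define h where "h L = (Tf (eta / 2 * real L) (nat \<lfloor>c * real L\<rfloor>)
          + Tf (a / 2 * real L) (NR * L + nat \<lfloor>c * real L\<rfloor>)
          + Tf (b / 2 * real L) (NR * L * (Ns - 1) - 1)) / real L" for L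
  show "\<forall>\<^sub>F L in sequentially. phi NR Ns eta gamma t \<le> - (1 / real L) * ln (p_miss NR Ns L eta gamma)"
    by (rule eventually_sequentiallyI[of 2]) (rule bounds_L(1)[OF NR Ns _ e g t z c a b ab])
  show "\<forall>\<^sub>F L in sequentially. - (1 / real L) * ln (p_miss NR Ns L eta gamma) \<le> h L"
    unfolding h_def by (rule eventually_sequentiallyI[of 2]) (rule bounds_L(2)[OF NR Ns _ e g t z c a b ab])
  show "(\<lambda>L. phi NR Ns eta gamma t) \<longlonglongrightarrow> phi NR Ns eta gamma t" by simp
  have n2: "real NR * (real Ns - 1) > 0" using NR Ns by simp
  have NRc: "real NR + c > 0" using c by simp
  have l1: "(\<lambda>L. Tf (eta / 2 * real L) (nat \<lfloor>c * real L\<rfloor>) / real L) \<longlonglongrightarrow> eta / 2 - c + c * ln (c / (eta / 2))"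
    by (rule T_asymp[OF ratio_floor[OF c] c]) (use e in simp)
  have l2: "(\<lambda>L. Tf (a / 2 * real L) (NR * L + nat \<lfloor>c * real L\<rfloor>) / real L)
      \<longlonglongrightarrow> a / 2 - (real NR + c) + (real NR + c) * ln ((real NR + c) / (a / 2))"
    by (rule T_asymp[OF ratio_floor2[OF c] NRc]) (use a in simp)
  have l3: "(\<lambda>L. Tf (b / 2 * real L) (NR * L * (Ns - 1) - 1) / real L)
      \<longlonglongrightarrow> b / 2 - real NR * (real Ns - 1) + real NR * (real Ns - 1) * ln (real NR * (real Ns - 1) / (b / 2))"
    by (rule T_asymp[OF ratio_m2[OF NR Ns] n2]) (use b in simp)
  have "(\<lambda>L. Tf (eta / 2 * real L) (nat \<lfloor>c * real L\<rfloor>) / real L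
      + Tf (a / 2 * real L) (NR * L + nat \<lfloor>c * real L\<rfloor>) / real L
      + Tf (b / 2 * real L) (NR * L * (Ns - 1) - 1) / real L) \<longlonglongrightarrow> Rf NR Ns eta a b c"
    unfolding Rf_def by (intro tendsto_add l1 l2 l3)
  then show "h \<longlonglongrightarrow> phi NR Ns eta gamma t" unfolding eq h_def by (simp add: add_divide_distrib)
qed

theorem proposition3:
  fixes NR Ns :: nat and eta gamma :: real
  assumes "NR \<ge> 1" and "Ns \<ge> 2" and "eta > 0" and "gamma > 0"
  shows "((\<lambda>L. - (1 / real L) * ln (p_miss NR Ns L eta gamma)) \<longlongrightarrow>
            (if gamma < (2 * real NR + eta) / (2 * real NR * (real Ns - 1))
             then Istar NR Ns eta gamma else 0)) sequentially
         \<and> mono_on {e. e > 0 \<and> gamma < (2 * real NR + e) / (2 * real NR * (real Ns - 1))}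
                   (\<lambda>e. Istar NR Ns e gamma)"
proof
  note NR = assms(1) and Ns = assms(2) and e = assms(3) and g = assms(4)
  show "mono_on {e. e > 0 \<and> gamma < (2 * real NR + e) / (2 * real NR * (real Ns - 1))}
                   (\<lambda>e. Istar NR Ns e gamma)" by (rule Istar_mono[OF NR Ns g])
  show "((\<lambda>L. - (1 / real L) * ln (p_miss NR Ns L eta gamma)) \<longlongrightarrow>
            (if gamma < (2 * real NR + eta) / (2 * real NR * (real Ns - 1))
             then Istar NR Ns eta gamma else 0)) sequentially"
  proof (cases "gamma < (2 * real NR + eta) / (2 * real NR * (real Ns - 1))")
    case True
    define q where "q = qstar NR Ns eta gamma"
    define v where "v = vstar NR Ns eta gamma"
    define t where "t = tstar NR Ns eta gamma"
    note F = q_facts[OF NR Ns e g, folded q_def v_def]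
    note T = t_facts[OF NR Ns e g, folded q_def v_def t_def]
    have qp: "q > 0" and vp: "v > 0" using F by auto
    have tp: "t > 0" using T(5) True by blast
    have lim: "(\<lambda>L. - (1 / real L) * ln (p_miss NR Ns L eta gamma)) \<longlonglongrightarrow> phi NR Ns eta gamma t"
    proof (rule limit_gen[OF NR Ns e g _ T(2), of "eta * q / 2" "gamma * v" v])
      show "0 \<le> t" using tp by simp
      show "0 < eta * q / 2" using e qp by simp
      show "0 < gamma * v" using g vp by simp
      show "0 < v" by (rule vp)
      show "gamma * v \<le> gamma * v" by simp
      show "phi NR Ns eta gamma t = Rf NR Ns eta (gamma * v) v (eta * q / 2)" using T(3) T(4) by simp
    qed
    then show ?thesis using True T(3) by simp
  next
    case False
    define n2 where "n2 = real NR * (real Ns - 1)"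
    have n2p: "n2 > 0" unfolding n2_def using NR Ns by simp
    have ab: "2 * real NR + eta \<le> gamma * (2 * n2)"
    proof -
      have "(2 * real NR + eta) / (2 * n2) \<le> gamma" using False unfolding n2_def by (simp add: mult.assoc)
      then show ?thesis using n2p by (simp add: divide_le_eq mult.commute)
    qed
    have phi0: "phi NR Ns eta gamma 0 = 0" unfolding phi_def by simp
    have Rf0: "Rf NR Ns eta (2 * real NR + eta) (2 * n2) (eta / 2) = 0"
    proof -
      have "(real NR + eta / 2) / ((2 * real NR + eta) / 2) = 1" using e by (simp add: field_simps)
      hence k2: "ln ((real NR + eta / 2) / ((2 * real NR + eta) / 2)) = 0" by (simp only: ln_one)
      have "n2 / (2 * n2 / 2) = 1" using n2p by simp
      hence k3: "ln (n2 / (2 * n2 / 2)) = 0" by (simp only: ln_one)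
      have k1: "ln ((eta / 2) / (eta / 2)) = 0" using e by simp
      have k4: "(2 * real NR + eta) / 2 - (real NR + eta / 2) = 0" by simp
      show ?thesis unfolding Rf_def n2_def[symmetric] k1 k2 k3 using k4 by simp
    qed
    have lim: "(\<lambda>L. - (1 / real L) * ln (p_miss NR Ns L eta gamma)) \<longlonglongrightarrow> phi NR Ns eta gamma 0"
    proof (rule limit_gen[OF NR Ns e g, of 0 "eta / 2" "2 * real NR + eta" "2 * n2"])
      show "phi NR Ns eta gamma 0 = Rf NR Ns eta (2 * real NR + eta) (2 * n2) (eta / 2)" using phi0 Rf0 by simp
    qed (use e n2p ab in auto)
    then show ?thesis using False phi0 by simp
  qed
qed


end
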